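(* Let $n\ge2$ and let $X_1,\dots,X_n$ be nonnegative random variables, $X_{n:n}=\max_iX_i$, $S_n=\sum_{i=1}^nX_i$, such that the distribution function of $X_{n:n}$ has infinite upper endpoint, $X_{n:n}\in\mathrm{GMDA}(h)$ for some positive $h$, and $$\lim_{x\to\infty}\frac{\mathbb{P}(|X_i|>t h(x),X_j>x)}{\mathbb{P}(X_{n:n}>x)}=0\ \text{for all }1\le i\ne j\le n,\ t>0,$$ $$\lim_{x\to\infty}\frac{\mathbb{P}(X_i>Lh(x),X_j>Lh(x))}{\mathbb{P}(X_{n:n}>x)}=0\ \text{for all }1\le i<j\le n\text{ and some }L>0.$$ For a nonempty $\Omega\subset\{1,\dots,n\}$ let $$u=\liminf_{x\to\infty}\frac{\sum_{i\in\Omega}\mathbb{P}(X_i>x)}{\sum_{i=1}^n\mathbb{P}(X_i>x)},\qquad U=\limsup_{x\to\infty}\frac{\sum_{i\in\Omega}\mathbb{P}(X_i>x)}{\sum_{i=1}^n\mathbb{P}(X_i>x)}.$$ Then $$u\le\liminf_{q\to1}\frac{\mathbb{E}\big(\sum_{i\in\Omega}X_i\,\big|\,S_n>\mathrm{VaR}_q(S_n)\big)}{\mathrm{VaR}_q(S_n)}\le\limsup_{q\to1}\frac{\mathbb{E}\big(\sum_{i\in\Omega}X_i\,\big|\,S_n>\mathrm{VaR}_q(S_n)\big)}{\mathrm{VaR}_q(S_n)}\le U.$$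
   Context: For $q\in(0,1)$, $\mathrm{VaR}_q(S_n)=\inf\{x:\mathbb{P}(S_n\le x)\ge q\}$. For a distribution function $F$, $\overline{F}=1-F$, $x_F=\sup\{x:F(x)<1\}$; $F\in\mathrm{GMDA}(h)$ means $\lim_{x\to x_F}\overline{F}(x+yh(x))/\overline{F}(x)=e^{-y}$ for all $y\in\mathbb{R}$. Random variables are assumed not degenerate at $0$. *)

theory Defs
  imports "HOL-Probability.Probability"
begin

definition distfun :: "'a measure \<Rightarrow> ('a \<Rightarrow> real) \<Rightarrow> real \<Rightarrow> real" where
  "distfun M Y x = measure M {\<omega> \<in> space M. Y \<omega> \<le> x}"

definition upper_endpoint :: "(real \<Rightarrow> real) \<Rightarrow> ereal" where
  "upper_endpoint F = Sup {ereal x | x. F x < 1}"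

definition GMDA :: "(real \<Rightarrow> real) \<Rightarrow> (real \<Rightarrow> real) \<Rightarrow> bool" where
  "GMDA F h = (\<forall>y::real.
     ((\<lambda>x. (1 - F (x + y * h x)) / (1 - F x)) \<longlongrightarrow> exp (- y))
       (if upper_endpoint F = \<infinity> then at_top else at_left (real_of_ereal (upper_endpoint F))))"

definition VaR :: "'a measure \<Rightarrow> ('a \<Rightarrow> real) \<Rightarrow> real \<Rightarrow> real" where
  "VaR M Y q = Inf {x. distfun M Y x \<ge> q}"

definition cond_exp_event :: "'a measure \<Rightarrow> ('a \<Rightarrow> real) \<Rightarrow> 'a set \<Rightarrow> real" where
  "cond_exp_event M Z A = (\<integral>\<omega>. indicator A \<omega> * Z \<omega> \<partial>M) / measure M A"

end

theory Submission
  imports Defs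
begin

locale thm41 = prob_space M for M :: "'a measure" +
  fixes X :: "nat \<Rightarrow> 'a \<Rightarrow> real" and n :: nat and h :: "real \<Rightarrow> real" and \<Omega> :: "nat set"
  assumes n2: "n \<ge> 2"
    and meas[measurable]: "\<And>i. i \<in> {1..n} \<Longrightarrow> X i \<in> borel_measurable M"
    and nonneg: "\<And>i \<omega>. i \<in> {1..n} \<Longrightarrow> \<omega> \<in> space M \<Longrightarrow> X i \<omega> \<ge> 0"
    and endpoint: "upper_endpoint (distfun M (\<lambda>\<omega>. Max ((\<lambda>i. X i \<omega>) ` {1..n}))) = \<infinity>"
    and hpos: "\<And>x. h x > 0"
    and gmda: "GMDA (distfun M (\<lambda>\<omega>. Max ((\<lambda>i. X i \<omega>) ` {1..n}))) h"
    and cond1: "\<And>i j t. i \<in> {1..n} \<Longrightarrow> j \<in> {1..n} \<Longrightarrow> i \<noteq> j \<Longrightarrow> t > 0 \<Longrightarrow>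
       ((\<lambda>x. measure M {\<omega> \<in> space M. \<bar>X i \<omega>\<bar> > t * h x \<and> X j \<omega> > x}
           / measure M {\<omega> \<in> space M. Max ((\<lambda>k. X k \<omega>) ` {1..n}) > x}) \<longlongrightarrow> 0) at_top"
    and cond2: "\<exists>L>0. \<forall>i\<in>{1..n}. \<forall>j\<in>{1..n}. i < j \<longrightarrow>
       ((\<lambda>x. measure M {\<omega> \<in> space M. X i \<omega> > L * h x \<and> X j \<omega> > L * h x}
           / measure M {\<omega> \<in> space M. Max ((\<lambda>k. X k \<omega>) ` {1..n}) > x}) \<longlongrightarrow> 0) at_top"
    and \<Omega>: "\<Omega> \<subseteq> {1..n}" "\<Omega> \<noteq> {}"
begin

definition Mx :: "'a \<Rightarrow> real" where "Mx \<omega> = Max ((\<lambda>i. X i \<omega>) ` {1..n})"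
definition S :: "'a \<Rightarrow> real" where "S \<omega> = (\<Sum>i\<in>{1..n}. X i \<omega>)"
definition D :: "real \<Rightarrow> real" where "D x = prob {\<omega> \<in> space M. Mx \<omega> > x}"
definition T :: "real \<Rightarrow> real" where "T x = (\<Sum>i\<in>{1..n}. prob {\<omega> \<in> space M. X i \<omega> > x})"

lemma I_fin: "finite {1..n}" and I_ne: "{1..n} \<noteq> {}" using n2 by auto

lemma Mx_meas[measurable]: "Mx \<in> borel_measurable M"
  unfolding Mx_def by (rule borel_measurable_Max[OF I_fin meas])

lemma S_meas[measurable]: "S \<in> borel_measurable M"
  unfolding S_def by (rule borel_measurable_sum) (rule meas)

lemma Mx_ge: "i \<in> {1..n} \<Longrightarrow> X i \<omega> \<le> Mx \<omega>"
  unfolding Mx_def using I_fin by (intro Max_ge) auto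

lemma Mx_attained: "\<exists>i\<in>{1..n}. Mx \<omega> = X i \<omega>"
proof -
  have "Mx \<omega> \<in> (\<lambda>i. X i \<omega>) ` {1..n}"
    unfolding Mx_def using I_fin I_ne by (intro Max_in) auto
  then show ?thesis by auto
qed

lemma Mx_nonneg: "\<omega> \<in> space M \<Longrightarrow> 0 \<le> Mx \<omega>"
  using Mx_ge[of 1 \<omega>] nonneg[of 1 \<omega>] n2 by auto

lemma S_nonneg: "\<omega> \<in> space M \<Longrightarrow> 0 \<le> S \<omega>"
  unfolding S_def using nonneg by (intro sum_nonneg) auto

lemma X_le_S: "i \<in> {1..n} \<Longrightarrow> \<omega> \<in> space M \<Longrightarrow> X i \<omega> \<le> S \<omega>"
  unfolding S_def using nonneg I_fin by (intro member_le_sum) auto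

lemma Mx_le_S: "\<omega> \<in> space M \<Longrightarrow> Mx \<omega> \<le> S \<omega>"
  using Mx_attained[of \<omega>] X_le_S by metis

lemma D_nonneg: "0 \<le> D x" unfolding D_def by simp
lemma D_le1: "D x \<le> 1" unfolding D_def by simp

lemma D_mono: "x \<le> y \<Longrightarrow> D y \<le> D x"
  unfolding D_def by (intro finite_measure_mono) auto

lemma D_neg: "x < 0 \<Longrightarrow> D x = 1"
proof -
  assume "x < 0"
  then have "{\<omega> \<in> space M. Mx \<omega> > x} = space M" using Mx_nonneg by force
  then show ?thesis unfolding D_def by (simp add: prob_space)
qed

lemma distfun_Mx: "distfun M Mx x = 1 - D x"
proof -
  have "{\<omega> \<in> space M. Mx \<omega> \<le> x} = space M - {\<omega> \<in> space M. Mx \<omega> > x}" by auto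
  then show ?thesis unfolding distfun_def D_def by (simp add: prob_compl)
qed

lemma distfun_Mx': "distfun M (\<lambda>\<omega>. Max ((\<lambda>i. X i \<omega>) ` {1..n})) = (\<lambda>x. 1 - D x)"
  using distfun_Mx unfolding Mx_def by (auto simp: fun_eq_iff)

lemma D_pos: "D x > 0"
proof (rule ccontr)
  assume "\<not> D x > 0"
  then have D0: "D x = 0" using D_nonneg[of x] by simp
  have "Sup {ereal y | y. 1 - D y < 1} \<le> ereal x"
  proof (rule Sup_least)
    fix z assume "z \<in> {ereal y | y. 1 - D y < 1}"
    then obtain y where z: "z = ereal y" "1 - D y < 1" by auto
    show "z \<le> ereal x"
    proof (rule ccontr)
      assume "\<not> z \<le> ereal x"
      then have "x \<le> y" using z by simp
      then have "D y \<le> 0" using D_mono[of x y] D0 by simp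
      then show False using z by simp
    qed
  qed
  then show False using endpoint unfolding distfun_Mx' upper_endpoint_def by simp
qed

lemma G: "((\<lambda>x. D (x + y * h x) / D x) \<longlongrightarrow> exp (- y)) at_top"
  using gmda endpoint unfolding GMDA_def distfun_Mx' by simp

lemma cond1': "i \<in> {1..n} \<Longrightarrow> j \<in> {1..n} \<Longrightarrow> i \<noteq> j \<Longrightarrow> t > 0 \<Longrightarrow>
       ((\<lambda>x. prob {\<omega> \<in> space M. X i \<omega> > t * h x \<and> X j \<omega> > x} / D x) \<longlongrightarrow> 0) at_top"
proof -
  assume a: "i \<in> {1..n}" "j \<in> {1..n}" "i \<noteq> j" "t > 0"
  have "{\<omega> \<in> space M. \<bar>X i \<omega>\<bar> > t * h x \<and> X j \<omega> > x} = {\<omega> \<in> space M. X i \<omega> > t * h x \<and> X j \<omega> > x}" for x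
    using nonneg[OF a(1)] by auto
  then show ?thesis using cond1[OF a] unfolding D_def Mx_def by simp
qed

lemma D_lim0: "(D \<longlongrightarrow> 0) at_top"
proof -
  define A where "A k = {\<omega> \<in> space M. Mx \<omega> > real k}" for k :: nat
  have "(\<lambda>k. prob (A k)) \<longlonglongrightarrow> prob (\<Inter> (range A))"
    by (rule finite_Lim_measure_decseq) (auto simp: A_def monotone_on_def)
  moreover have "\<Inter> (range A) = {}"
  proof safe
    fix \<omega> assume "\<omega> \<in> \<Inter> (range A)"
    then have "Mx \<omega> > real (nat (ceiling (Mx \<omega>)))" unfolding A_def by blast
    then show "\<omega> \<in> {}" by linarith
  qed
  ultimately have lim: "(\<lambda>k. D (real k)) \<longlonglongrightarrow> 0" unfolding A_def D_def by simp
  show ?thesis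
  proof (rule order_tendstoI)
    fix e :: real assume "e > 0"
    then obtain N where "D (real N) < e" using order_tendstoD(2)[OF lim \<open>e > 0\<close>]
      by (auto simp: eventually_sequentially)
    then have "\<forall>x\<ge>real N. D x < e" using D_mono by (meson le_less_trans)
    then show "\<forall>\<^sub>F x in at_top. D x < e" by (auto simp: eventually_at_top_linorder)
  next
    fix e :: real assume "e < 0"
    then show "\<forall>\<^sub>F x in at_top. e < D x" using D_nonneg by (intro always_eventually allI) (auto intro: less_le_trans)
  qed
qed

end

context thm41 begin

lemma G_upper: "b > exp (- y) \<Longrightarrow> eventually (\<lambda>x. D (x + y * h x) < b * D x) at_top"
proof -
  assume "b > exp (- y)"
  from order_tendstoD(2)[OF G this] show ?thesis
    by eventually_elim (use D_pos in \<open>auto simp: divide_less_eq\<close>)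
qed

lemma G_lower: "b < exp (- y) \<Longrightarrow> eventually (\<lambda>x. b * D x < D (x + y * h x)) at_top"
proof -
  assume "b < exp (- y)"
  from order_tendstoD(1)[OF G this] show ?thesis
    by eventually_elim (use D_pos in \<open>auto simp: less_divide_eq\<close>)
qed

lemma h_small: "a > 0 \<Longrightarrow> eventually (\<lambda>x. h x \<le> a * x) at_top"
proof -
  assume a: "a > 0"
  define K where "K = exp (1 / a) + 1"
  have K: "K > 1" unfolding K_def by simp
  have e1: "eventually (\<lambda>x. D (x + (- 1 / a) * h x) < K * D x) at_top"
    by (rule G_upper) (simp add: K_def)
  have e2: "eventually (\<lambda>x. D x < 1 / K) at_top"
    using order_tendstoD(2)[OF D_lim0, of "1 / K"] K by simp
  from e1 e2 show ?thesis
  proof eventually_elim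
    case (elim x)
    show ?case
    proof (rule ccontr)
      assume "\<not> h x \<le> a * x"
      then have "h x / a > x" using a by (simp add: pos_less_divide_eq mult.commute)
      then have "x + (- 1 / a) * h x < 0" by simp
      then have "D (x + (- 1 / a) * h x) = 1" by (rule D_neg)
      then have "1 < K * D x" using elim by simp
      moreover have "K * D x < 1" using elim(2) K by (simp add: less_divide_eq mult.commute)
      ultimately show False by simp
    qed
  qed
qed

lemma rapid: "lam > 1 \<Longrightarrow> eta > 0 \<Longrightarrow> eventually (\<lambda>x. D (lam * x) \<le> eta * D x) at_top"
proof -
  assume lam: "lam > 1" and eta: "eta > 0"
  define y where "y = \<bar>ln eta\<bar> + 1"
  have y: "y > 0" unfolding y_def by simp
  have "exp (- y) \<le> exp (ln eta - 1)" unfolding y_def by simp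
  also have "\<dots> < eta"
  proof -
    have "exp (1::real) > 1" by simp
    then have "eta < eta * exp 1" using eta by simp
    then show ?thesis using eta by (simp add: exp_diff divide_less_eq)
  qed
  finally have e1: "eventually (\<lambda>x. D (x + y * h x) < eta * D x) at_top" by (rule G_upper)
  have e2: "eventually (\<lambda>x. h x \<le> ((lam - 1) / y) * x) at_top"
    using h_small[of "(lam - 1) / y"] lam y by simp
  have e3: "eventually (\<lambda>x::real. x \<ge> 0) at_top" by (rule eventually_ge_at_top)
  from e1 e2 e3 show ?thesis
  proof eventually_elim
    case (elim x)
    have "y * h x \<le> (lam - 1) * x" using elim(2) y by (simp add: field_simps)
    then have "x + y * h x \<le> lam * x" by (simp add: algebra_simps)
    then have "D (lam * x) \<le> D (x + y * h x)" by (rule D_mono)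
    then show ?case using elim(1) by simp
  qed
qed

lemma shift_at_top: "c \<ge> 0 \<Longrightarrow> filterlim (\<lambda>x. x - c * h x) at_top at_top"
proof -
  assume c: "c \<ge> 0"
  have e: "eventually (\<lambda>x. h x \<le> (1 / (2 * c + 2)) * x) at_top"
    using h_small[of "1 / (2 * c + 2)"] c by simp
  show ?thesis unfolding filterlim_at_top
  proof (intro allI)
    fix Z :: real
    have "eventually (\<lambda>x. x \<ge> 2 * \<bar>Z\<bar>) at_top" by simp
    with e show "eventually (\<lambda>x. Z \<le> x - c * h x) at_top"
    proof eventually_elim
      case (elim x)
      have x0: "x \<ge> 0" using elim(2) by linarith
      have "c * h x \<le> c * ((1 / (2 * c + 2)) * x)" using elim(1) c by (rule mult_left_mono)
      also have "\<dots> \<le> x / 2" using c x0 by (simp add: field_simps)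
      finally show ?case using elim(2) by linarith
    qed
  qed
qed

lemma contra_aux:
  fixes A B p E :: real
  assumes "9/10 * p * A < 11/10 * e2 * B" "9/10 * E * B \<le> A" "e2 = E * p * p"
    "p \<le> 1/2" "p > 0" "E > 0" "B > 0"
  shows False
proof -
  define K where "K = p * E * B"
  have K: "K > 0" using assms unfolding K_def by simp
  have "81/100 * K = 9/10 * p * (9/10 * E * B)" unfolding K_def by simp
  also have "\<dots> \<le> 9/10 * p * A" using assms by (intro mult_left_mono) auto
  also have "\<dots> < 11/10 * e2 * B" by (rule assms(1))
  also have "\<dots> = (11/10 * p) * K" unfolding K_def assms(3) by simp
  finally have "81/100 * K < (11/10 * p) * K" .
  then have "81/100 < 11/10 * p" using K by simp
  then show False using assms by simp
qed

lemma selfneg: "c \<ge> 0 \<Longrightarrow> eventually (\<lambda>x. h (x - c * h x) \<le> 2 * h x) at_top"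
proof -
  assume c: "c \<ge> 0"
  have E1: "eventually (\<lambda>x. D (x + (2 - c) * h x) < (11/10 * exp (c - 2)) * D x) at_top"
    by (rule G_upper) simp
  have E2: "eventually (\<lambda>x. (9/10 * exp c) * D x < D (x + (- c) * h x)) at_top"
    by (rule G_lower) simp
  have E3': "eventually (\<lambda>x. (9/10 * exp (-1)) * D x < D (x + 1 * h x)) at_top"
    by (rule G_lower) simp
  have E3: "eventually (\<lambda>x. (9/10 * exp (-1)) * D (x - c * h x)
       < D ((x - c * h x) + 1 * h (x - c * h x))) at_top"
    using filterlim_iff[THEN iffD1, OF shift_at_top[OF c], rule_format, OF E3'] .
  from E1 E2 E3 show ?thesis
  proof eventually_elim
    case (elim x)
    show ?case
    proof (rule ccontr)
      assume "\<not> h (x - c * h x) \<le> 2 * h x"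
      then have "x + (2 - c) * h x \<le> (x - c * h x) + 1 * h (x - c * h x)"
        by (simp add: algebra_simps)
      then have "D ((x - c * h x) + 1 * h (x - c * h x)) \<le> D (x + (2 - c) * h x)" by (rule D_mono)
      then have "(9/10 * exp (-1)) * D (x - c * h x) < (11/10 * exp (c - 2)) * D x"
        using elim by linarith
      moreover have "(9/10 * exp c) * D x \<le> D (x - c * h x)" using elim(2) by simp
      moreover have "exp (c - 2) = exp c * exp (-1) * exp (-1)" by (simp flip: exp_add)
      moreover have "exp (-1::real) \<le> 1/2"
      proof -
        have "exp (1::real) \<ge> 2" using exp_ge_add_one_self[of 1] by simp
        then have "1 / exp 1 \<le> 1 / (2::real)" by (intro divide_left_mono) auto
        then show ?thesis by (simp add: exp_minus inverse_eq_divide)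
      qed
      moreover have "exp (-1::real) > 0" "exp c > 0" "D x > 0" by (auto simp: D_pos)
      ultimately show False by (rule contra_aux)
    qed
  qed
qed

end

context thm41 begin

definition A :: "real \<Rightarrow> 'a set" where "A y = {\<omega> \<in> space M. Mx \<omega> > y}"

lemma A_sets[measurable]: "A y \<in> sets M" unfolding A_def by measurable

lemma D_A: "D y = prob (A y)" unfolding D_def A_def ..

lemma pw_tail:
  assumes y: "y > 0" and \<omega>: "\<omega> \<in> space M"
  shows "ennreal (Mx \<omega> * indicator (A y) \<omega>)
     \<le> (\<Sum>k. ennreal (2 ^ (k+1) * y) * indicator (A (2 ^ k * y)) \<omega>)"
proof (cases "Mx \<omega> > y")
  case False
  then show ?thesis unfolding A_def by simp
next
  case True
  define K where "K = {k. 2 ^ k * y < Mx \<omega>}"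
  obtain N where N: "Mx \<omega> / y < 2 ^ N" using real_arch_pow[of 2 "Mx \<omega> / y"] by auto
  have "K \<subseteq> {..<N}"
  proof
    fix k assume "k \<in> K"
    then have "2 ^ k * y < Mx \<omega>" unfolding K_def by simp
    moreover have "Mx \<omega> < 2 ^ N * y" using N y by (simp add: divide_less_eq)
    ultimately have "2 ^ k * y < 2 ^ N * y" by simp
    then have "(2::real) ^ k < 2 ^ N" using y by simp
    then show "k \<in> {..<N}" by simp
  qed
  then have finK: "finite K" by (rule finite_subset) simp
  have "0 \<in> K" unfolding K_def using True by simp
  define m where "m = Max K"
  have mK: "m \<in> K" unfolding m_def using finK \<open>0 \<in> K\<close> by (intro Max_in) auto
  have "Suc m \<notin> K"
  proof
    assume "Suc m \<in> K"
    then have "Suc m \<le> m" using Max_ge[OF finK, of "Suc m"] unfolding m_def by simp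
    then show False by simp
  qed
  then have up: "Mx \<omega> \<le> 2 ^ (m+1) * y" unfolding K_def by simp
  have inA: "\<omega> \<in> A (2 ^ m * y)" using mK \<omega> unfolding K_def A_def by simp
  have "ennreal (Mx \<omega> * indicator (A y) \<omega>) = ennreal (Mx \<omega>)"
    using True \<omega> unfolding A_def by simp
  also have "\<dots> \<le> ennreal (2 ^ (m+1) * y) * indicator (A (2 ^ m * y)) \<omega>"
    using inA up by (simp add: ennreal_leI)
  also have "\<dots> \<le> (\<Sum>k<Suc m. ennreal (2 ^ (k+1) * y) * indicator (A (2 ^ k * y)) \<omega>)"
    by (rule member_le_sum) auto
  also have "\<dots> \<le> (\<Sum>k. ennreal (2 ^ (k+1) * y) * indicator (A (2 ^ k * y)) \<omega>)"
    by (rule sum_le_suminf[OF summableI]) auto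
  finally show ?thesis .
qed

lemma tail_nn:
  obtains y0 where "y0 > 0" "\<And>y. y \<ge> y0 \<Longrightarrow>
     (\<integral>\<^sup>+\<omega>. ennreal (Mx \<omega> * indicator (A y) \<omega>) \<partial>M) \<le> ennreal (4 * y * D y)"
proof -
  obtain z0 where z0: "\<And>z. z \<ge> z0 \<Longrightarrow> D (2 * z) \<le> 1/4 * D z"
    using rapid[of 2 "1/4"] by (auto simp: eventually_at_top_linorder)
  define y0 where "y0 = max z0 1"
  have "y0 > 0" unfolding y0_def by simp
  moreover have "(\<integral>\<^sup>+\<omega>. ennreal (Mx \<omega> * indicator (A y) \<omega>) \<partial>M) \<le> ennreal (4 * y * D y)"
    if y: "y \<ge> y0" for y
  proof -
    have ypos: "y > 0" using y unfolding y0_def by simp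
    have Dk: "D (2 ^ k * y) \<le> (1/4) ^ k * D y" for k
    proof (induction k)
      case 0 then show ?case by simp
    next
      case (Suc k)
      have "2 ^ k * y \<ge> z0"
      proof -
        have "(1::real) \<le> 2 ^ k" by simp
        then have "y \<le> 2 ^ k * y" using ypos by simp
        moreover have "z0 \<le> y" using y unfolding y0_def by simp
        ultimately show ?thesis by linarith
      qed
      then have "D (2 * (2 ^ k * y)) \<le> 1/4 * D (2 ^ k * y)" by (rule z0)
      also have "\<dots> \<le> 1/4 * ((1/4) ^ k * D y)" using Suc by simp
      finally show ?case by (simp add: mult.assoc)
    qed
    have "(\<integral>\<^sup>+\<omega>. ennreal (Mx \<omega> * indicator (A y) \<omega>) \<partial>M)
        \<le> (\<integral>\<^sup>+\<omega>. (\<Sum>k. ennreal (2 ^ (k+1) * y) * indicator (A (2 ^ k * y)) \<omega>) \<partial>M)"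
      by (rule nn_integral_mono) (rule pw_tail[OF ypos])
    also have "\<dots> = (\<Sum>k. \<integral>\<^sup>+\<omega>. ennreal (2 ^ (k+1) * y) * indicator (A (2 ^ k * y)) \<omega> \<partial>M)"
      by (rule nn_integral_suminf) simp
    also have "\<dots> = (\<Sum>k. ennreal (2 ^ (k+1) * y * D (2 ^ k * y)))"
      by (simp add: D_A emeasure_eq_measure ennreal_mult'' ypos nn_integral_cmult_indicator)
    also have "\<dots> \<le> (\<Sum>k. ennreal (2 * y * D y * (1/2) ^ k))"
    proof (rule suminf_le[OF _ summableI summableI])
      fix k
      have "2 ^ (k+1) * y * D (2 ^ k * y) \<le> 2 ^ (k+1) * y * ((1/4) ^ k * D y)"
        using Dk[of k] ypos by (intro mult_left_mono) auto
      also have "\<dots> = 2 * y * D y * (1/2) ^ k"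
      proof -
        have "(4::real) ^ k = 2 ^ k * 2 ^ k" by (simp flip: power_mult_distrib)
        then show ?thesis by (simp add: power_divide field_simps)
      qed
      finally show "ennreal (2 ^ (k+1) * y * D (2 ^ k * y)) \<le> ennreal (2 * y * D y * (1/2) ^ k)"
        by (rule ennreal_leI)
    qed
    also have "\<dots> = ennreal (\<Sum>k. 2 * y * D y * (1/2) ^ k)"
      using ypos D_nonneg by (intro suminf_ennreal2) (auto intro!: summable_mult summable_geometric)
    also have "(\<Sum>k. 2 * y * D y * (1/2::real) ^ k) = 4 * y * D y"
      using suminf_mult[OF summable_geometric[of "1/2::real"], of "2 * y * D y"]
        suminf_geometric[of "1/2::real"] by simp
    finally show ?thesis .
  qed
  ultimately show ?thesis using that by blast
qed

end

context thm41 begin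

lemma Mx_int: "integrable M Mx"
proof -
  obtain y0 where y0: "y0 > 0" "\<And>y. y \<ge> y0 \<Longrightarrow>
     (\<integral>\<^sup>+\<omega>. ennreal (Mx \<omega> * indicator (A y) \<omega>) \<partial>M) \<le> ennreal (4 * y * D y)"
    using tail_nn by blast
  have i1: "integrable M (\<lambda>\<omega>. Mx \<omega> * indicator (A y0) \<omega>)"
  proof (rule integrableI_nonneg)
    show "AE \<omega> in M. 0 \<le> Mx \<omega> * indicator (A y0) \<omega>"
      using Mx_nonneg by (auto simp: indicator_def)
    show "(\<integral>\<^sup>+\<omega>. ennreal (Mx \<omega> * indicator (A y0) \<omega>) \<partial>M) < \<infinity>"
      using y0(2)[of y0] by (simp add: le_less_trans)
  qed simp
  have "integrable M (\<lambda>\<omega>. Mx \<omega> * indicator (A y0) \<omega> + y0)"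
    using i1 by simp
  then show ?thesis
  proof (rule Bochner_Integration.integrable_bound)
    show "AE \<omega> in M. norm (Mx \<omega>) \<le> norm (Mx \<omega> * indicator (A y0) \<omega> + y0)"
      using Mx_nonneg y0(1) by (auto simp: indicator_def A_def)
  qed simp
qed

lemma Mx_ind_int[simp]: "integrable M (\<lambda>\<omega>. Mx \<omega> * indicator B \<omega>)" if "B \<in> sets M" for B
  using Mx_int that by (intro integrable_real_mult_indicator) auto

lemma X_int: "i \<in> {1..n} \<Longrightarrow> B \<in> sets M \<Longrightarrow> integrable M (\<lambda>\<omega>. indicator B \<omega> * X i \<omega>)"
  using Mx_int
proof (rule Bochner_Integration.integrable_bound)
  assume "i \<in> {1..n}" "B \<in> sets M"
  then show "(\<lambda>\<omega>. indicator B \<omega> * X i \<omega>) \<in> borel_measurable M" by measurable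
  show "AE \<omega> in M. norm (indicator B \<omega> * X i \<omega>) \<le> norm (Mx \<omega>)"
    using nonneg[OF \<open>i \<in> {1..n}\<close>] Mx_ge[OF \<open>i \<in> {1..n}\<close>] Mx_nonneg
    by (auto simp: indicator_def)
qed

lemma tail_int: "eventually (\<lambda>y. (\<integral>\<omega>. Mx \<omega> * indicator (A y) \<omega> \<partial>M) \<le> 4 * y * D y) at_top"
proof -
  obtain y0 where y0: "y0 > 0" "\<And>y. y \<ge> y0 \<Longrightarrow>
     (\<integral>\<^sup>+\<omega>. ennreal (Mx \<omega> * indicator (A y) \<omega>) \<partial>M) \<le> ennreal (4 * y * D y)"
    using tail_nn by blast
  have "(\<integral>\<omega>. Mx \<omega> * indicator (A y) \<omega> \<partial>M) \<le> 4 * y * D y" if y: "y \<ge> y0" for y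
  proof -
    have "(\<integral>\<omega>. Mx \<omega> * indicator (A y) \<omega> \<partial>M)
        = enn2real (\<integral>\<^sup>+\<omega>. ennreal (Mx \<omega> * indicator (A y) \<omega>) \<partial>M)"
      using Mx_nonneg by (intro integral_eq_nn_integral) (auto simp: indicator_def)
    also have "\<dots> \<le> enn2real (ennreal (4 * y * D y))"
      using y0(2)[OF y] by (rule enn2real_mono) simp
    also have "\<dots> = 4 * y * D y" using y y0(1) D_nonneg by simp
    finally show ?thesis .
  qed
  then show ?thesis by (auto simp: eventually_at_top_linorder)
qed

lemma small_sum:
  assumes "finite P" "\<And>p. p \<in> P \<Longrightarrow> ((\<lambda>x. f p x / D x) \<longlongrightarrow> 0) at_top" "e > 0"
  shows "eventually (\<lambda>x. (\<Sum>p\<in>P. f p x) \<le> e * D x) at_top"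
proof -
  have "((\<lambda>x. \<Sum>p\<in>P. f p x / D x) \<longlongrightarrow> (\<Sum>p\<in>P. 0)) at_top"
    by (rule tendsto_sum) (rule assms(2))
  then have "((\<lambda>x. \<Sum>p\<in>P. f p x / D x) \<longlongrightarrow> 0) at_top" by simp
  from order_tendstoD(2)[OF this assms(3)] show ?thesis
  proof eventually_elim
    case (elim x)
    then have "(\<Sum>p\<in>P. f p x) / D x < e" by (simp add: sum_divide_distrib)
    then show ?case using D_pos[of x] by (simp add: divide_less_eq)
  qed
qed

definition Pairs :: "(nat \<times> nat) set" where "Pairs = Sigma {1..n} (\<lambda>i. {1..n} - {i})"

lemma Pairs_fin: "finite Pairs" unfolding Pairs_def by auto

lemma T_le: "e > 0 \<Longrightarrow> eventually (\<lambda>x. T x \<le> (1 + e) * D x) at_top"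
proof -
  assume e: "e > 0"
  have ev1: "eventually (\<lambda>x. (\<Sum>p\<in>Pairs. prob {\<omega> \<in> space M. X (fst p) \<omega> > 1 * h x \<and> X (snd p) \<omega> > x})
     \<le> e * D x) at_top"
    using Pairs_fin e by (intro small_sum) (auto simp: Pairs_def intro!: cond1'[where t=1, simplified])
  have ev2: "eventually (\<lambda>x. h x \<le> 1 * x) at_top" by (rule h_small) simp
  from ev1 ev2 show ?thesis
  proof eventually_elim
    case (elim x)
    define B where "B i = {\<omega> \<in> space M. X i \<omega> > x \<and> (\<forall>j\<in>{1..n} - {i}. X j \<omega> \<le> x)}" for i
    define C where "C i j = {\<omega> \<in> space M. X i \<omega> > 1 * h x \<and> X j \<omega> > x}" for i j
    have Bs: "B i \<in> sets M" if "i \<in> {1..n}" for i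
      unfolding B_def using that by measurable
    have Cs: "C i j \<in> sets M" if "i \<in> {1..n}" "j \<in> {1..n}" for i j
      unfolding C_def using that by measurable
    have step: "prob {\<omega> \<in> space M. X i \<omega> > x} \<le> prob (B i) + (\<Sum>j\<in>{1..n} - {i}. prob (C i j))"
      if i: "i \<in> {1..n}" for i
    proof -
      have "{\<omega> \<in> space M. X i \<omega> > x} \<subseteq> B i \<union> (\<Union>j\<in>{1..n} - {i}. C i j)"
      proof
        fix \<omega> assume w: "\<omega> \<in> {\<omega> \<in> space M. X i \<omega> > x}"
        show "\<omega> \<in> B i \<union> (\<Union>j\<in>{1..n} - {i}. C i j)"
        proof (cases "\<forall>j\<in>{1..n} - {i}. X j \<omega> \<le> x")
          case True then show ?thesis using w unfolding B_def by auto
        next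
          case False
          then obtain j where "j \<in> {1..n} - {i}" "X j \<omega> > x" by (meson not_le)
          then show ?thesis using w elim(2) unfolding C_def by auto
        qed
      qed
      then have "prob {\<omega> \<in> space M. X i \<omega> > x} \<le> prob (B i \<union> (\<Union>j\<in>{1..n} - {i}. C i j))"
        using Bs Cs i by (intro finite_measure_mono) auto
      also have "\<dots> \<le> prob (B i) + prob (\<Union>j\<in>{1..n} - {i}. C i j)"
        using Bs Cs i by (intro measure_Un_le) auto
      also have "prob (\<Union>j\<in>{1..n} - {i}. C i j) \<le> (\<Sum>j\<in>{1..n} - {i}. prob (C i j))"
        using Cs i by (intro finite_measure_subadditive_finite) auto
      finally show ?thesis by simp
    qed
    have "T x \<le> (\<Sum>i\<in>{1..n}. prob (B i) + (\<Sum>j\<in>{1..n} - {i}. prob (C i j)))"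
      unfolding T_def by (intro sum_mono step)
    also have "\<dots> = (\<Sum>i\<in>{1..n}. prob (B i)) + (\<Sum>i\<in>{1..n}. \<Sum>j\<in>{1..n} - {i}. prob (C i j))"
      by (simp add: sum.distrib)
    also have "(\<Sum>i\<in>{1..n}. prob (B i)) = prob (\<Union>i\<in>{1..n}. B i)"
    proof (rule finite_measure_finite_Union[symmetric])
      show "disjoint_family_on B {1..n}"
        unfolding disjoint_family_on_def B_def by force
    qed (use Bs in auto)
    also have "prob (\<Union>i\<in>{1..n}. B i) \<le> D x"
    proof -
      have "(\<Union>i\<in>{1..n}. B i) \<subseteq> {\<omega> \<in> space M. x < Mx \<omega>}"
      proof
        fix \<omega> assume "\<omega> \<in> (\<Union>i\<in>{1..n}. B i)"
        then obtain i where "i \<in> {1..n}" "\<omega> \<in> B i" by blast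
        then show "\<omega> \<in> {\<omega> \<in> space M. x < Mx \<omega>}"
          using Mx_ge[of i \<omega>] unfolding B_def by auto
      qed
      then show ?thesis unfolding D_def by (intro finite_measure_mono) auto
    qed
    also have "(\<Sum>i\<in>{1..n}. \<Sum>j\<in>{1..n} - {i}. prob (C i j))
        = (\<Sum>p\<in>Pairs. prob {\<omega> \<in> space M. X (fst p) \<omega> > 1 * h x \<and> X (snd p) \<omega> > x})"
      unfolding Pairs_def C_def by (subst sum.Sigma) (auto simp: split_beta)
    finally show ?case using elim(1) by (simp add: algebra_simps)
  qed
qed

end

context thm41 begin

lemma incl:
  assumes w: "\<omega> \<in> space M" and Sx: "S \<omega> > x" and L: "L > 0" and t: "t > 0"
    and small: "real n * (L * hx) < x" and hx: "hx > 0"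
  shows "(\<exists>i\<in>{1..n}. \<exists>j\<in>{1..n}. i < j \<and> X i \<omega> > L * hx \<and> X j \<omega> > L * hx)
       \<or> (x - t * hx < Mx \<omega>)
       \<or> (\<exists>i\<in>{1..n}. \<exists>j\<in>{1..n}. i \<noteq> j \<and> X i \<omega> > t / (real n - 1) * hx
            \<and> X j \<omega> > x - (real n - 1) * L * hx)"
proof (cases "\<exists>i\<in>{1..n}. \<exists>j\<in>{1..n}. i < j \<and> X i \<omega> > L * hx \<and> X j \<omega> > L * hx")
  case True then show ?thesis by blast
next
  case False
  have "\<exists>j\<in>{1..n}. X j \<omega> > L * hx"
  proof (rule ccontr)
    assume "\<not> ?thesis"
    then have le: "\<forall>j\<in>{1..n}. X j \<omega> \<le> L * hx" by (meson not_le)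
    have "S \<omega> \<le> (\<Sum>i\<in>{1..n}. L * hx)" unfolding S_def using le by (intro sum_mono) blast
    then show False using Sx small by simp
  qed
  then obtain j where j: "j \<in> {1..n}" "X j \<omega> > L * hx" by blast
  have others: "X i \<omega> \<le> L * hx" if "i \<in> {1..n} - {j}" for i
  proof (rule ccontr)
    assume "\<not> X i \<omega> \<le> L * hx"
    then have "X i \<omega> > L * hx" by simp
    moreover have "i < j \<or> j < i" using that by auto
    ultimately show False using False j that by auto
  qed
  have Ssplit: "S \<omega> = X j \<omega> + (\<Sum>i\<in>{1..n} - {j}. X i \<omega>)"
    unfolding S_def using j by (subst sum.remove[of _ j]) auto
  have card: "real (card ({1..n} - {j})) = real n - 1" using j n2 by simp
  have "(\<Sum>i\<in>{1..n} - {j}. X i \<omega>) \<le> (\<Sum>i\<in>{1..n} - {j}. L * hx)" by (intro sum_mono others)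
  also have "\<dots> = (real n - 1) * L * hx" using card by simp
  finally have rest: "(\<Sum>i\<in>{1..n} - {j}. X i \<omega>) \<le> (real n - 1) * L * hx" .
  have Xj: "X j \<omega> > x - (real n - 1) * L * hx" using Ssplit rest Sx by linarith
  show ?thesis
  proof (cases "x - t * hx < Mx \<omega>")
    case True then show ?thesis by blast
  next
    case False
    then have "X j \<omega> \<le> x - t * hx" using Mx_ge[OF j(1), of \<omega>] by linarith
    then have big: "(\<Sum>i\<in>{1..n} - {j}. X i \<omega>) > t * hx" using Ssplit Sx by linarith
    have "\<exists>i\<in>{1..n} - {j}. X i \<omega> > t / (real n - 1) * hx"
    proof (rule ccontr)
      assume "\<not> ?thesis"
      then have le: "\<forall>i\<in>{1..n} - {j}. X i \<omega> \<le> t / (real n - 1) * hx" by (meson not_le)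
      have "(\<Sum>i\<in>{1..n} - {j}. X i \<omega>) \<le> (\<Sum>i\<in>{1..n} - {j}. t / (real n - 1) * hx)"
        using le by (intro sum_mono) blast
      also have "\<dots> = t * hx" using card n2 by simp
      finally show False using big by simp
    qed
    then obtain i where "i \<in> {1..n} - {j}" "X i \<omega> > t / (real n - 1) * hx" by blast
    then show ?thesis using j Xj by blast
  qed
qed

end

context thm41 begin

lemma K: "e > 0 \<Longrightarrow> eventually (\<lambda>x. prob {\<omega> \<in> space M. S \<omega> > x \<and> Mx \<omega> \<le> x} \<le> e * D x) at_top"
proof -
  assume e: "e > 0"
  obtain L where L: "L > 0" and c2: "\<And>i j. i \<in> {1..n} \<Longrightarrow> j \<in> {1..n} \<Longrightarrow> i < j \<Longrightarrow>
       ((\<lambda>x. prob {\<omega> \<in> space M. X i \<omega> > L * h x \<and> X j \<omega> > L * h x} / D x) \<longlongrightarrow> 0) at_top"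
    using cond2 unfolding D_def Mx_def by blast
  define P2 where "P2 = {p \<in> {1..n} \<times> {1..n}. fst p < snd p}"
  have P2fin: "finite P2" unfolding P2_def by (rule finite_subset[of _ "{1..n} \<times> {1..n}"]) auto
  define t where "t = ln (1 + e / 4)"
  have t: "t > 0" "exp t = 1 + e / 4" unfolding t_def using e by auto
  define s where "s = t / (real n - 1)"
  have s: "s > 0" unfolding s_def using t n2 by simp
  define c where "c = (real n - 1) * L"
  have c: "c \<ge> 0" unfolding c_def using L n2 by simp
  have ev_a: "eventually (\<lambda>x. (\<Sum>p\<in>P2. prob {\<omega> \<in> space M. X (fst p) \<omega> > L * h x \<and> X (snd p) \<omega> > L * h x})
      \<le> e / 3 * D x) at_top"
    using P2fin e by (intro small_sum) (auto simp: P2_def intro!: c2)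
  have ev_b: "eventually (\<lambda>x. D (x + (- t) * h x) < (1 + e / 3) * D x) at_top"
    by (rule G_upper) (use t e in simp)
  have ev_c0: "eventually (\<lambda>x. (\<Sum>p\<in>Pairs. prob {\<omega> \<in> space M. X (fst p) \<omega> > (s / 2) * h x \<and> X (snd p) \<omega> > x})
      \<le> e / (6 * exp c) * D x) at_top"
  proof (rule small_sum[OF Pairs_fin])
    fix p assume "p \<in> Pairs"
    then show "((\<lambda>x. prob {\<omega> \<in> space M. X (fst p) \<omega> > (s / 2) * h x \<and> X (snd p) \<omega> > x} / D x) \<longlongrightarrow> 0) at_top"
      unfolding Pairs_def using s by (intro cond1') auto
  next
    show "e / (6 * exp c) > 0" using e by simp
  qed
  have ev_c: "eventually (\<lambda>x. (\<Sum>p\<in>Pairs. prob {\<omega> \<in> space M. X (fst p) \<omega> > (s / 2) * h (x - c * h x)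
        \<and> X (snd p) \<omega> > x - c * h x}) \<le> e / (6 * exp c) * D (x - c * h x)) at_top"
    using filterlim_iff[THEN iffD1, OF shift_at_top[OF c], rule_format, OF ev_c0] .
  have ev_d: "eventually (\<lambda>x. D (x + (- c) * h x) < (2 * exp c) * D x) at_top"
    by (rule G_upper) simp
  have ev_e: "eventually (\<lambda>x. h (x - c * h x) \<le> 2 * h x) at_top" by (rule selfneg[OF c])
  have ev_f: "eventually (\<lambda>x. h x \<le> (1 / (2 * real n * L)) * x) at_top"
    by (rule h_small) (use L n2 in simp)
  have ev_g: "eventually (\<lambda>x::real. x > 0) at_top" by (rule eventually_gt_at_top)
  from ev_a ev_b ev_c ev_d ev_e ev_f ev_g show ?thesis
  proof eventually_elim
    case (elim x)
    define x' where "x' = x - c * h x"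
    define hx where "hx = h x"
    have hx: "hx > 0" unfolding hx_def by (rule hpos)
    have small: "real n * (L * hx) < x"
    proof -
      have "real n * (L * hx) \<le> real n * (L * ((1 / (2 * real n * L)) * x))"
        using elim(6) L unfolding hx_def by (intro mult_left_mono) auto
      also have "\<dots> = x / 2" using L n2 by (simp add: field_simps)
      finally show ?thesis using elim(7) by simp
    qed
    define V1 where "V1 p = {\<omega> \<in> space M. X (fst p) \<omega> > L * h x \<and> X (snd p) \<omega> > L * h x}" for p
    define V3 where "V3 p = {\<omega> \<in> space M. X (fst p) \<omega> > (s / 2) * h x' \<and> X (snd p) \<omega> > x'}" for p
    define U2 where "U2 = A (x - t * h x) - A x"
    have V1s: "V1 p \<in> sets M" if "p \<in> P2" for p
      using that unfolding V1_def P2_def by (cases p) simp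
    have V3s: "V3 p \<in> sets M" if "p \<in> Pairs" for p
      using that unfolding V3_def Pairs_def by (cases p) simp
    have U2s: "U2 \<in> sets M" unfolding U2_def by simp
    have sub: "{\<omega> \<in> space M. S \<omega> > x \<and> Mx \<omega> \<le> x} \<subseteq> (\<Union>p\<in>P2. V1 p) \<union> U2 \<union> (\<Union>p\<in>Pairs. V3 p)"
    proof
      fix \<omega> assume w: "\<omega> \<in> {\<omega> \<in> space M. S \<omega> > x \<and> Mx \<omega> \<le> x}"
      then have ws: "\<omega> \<in> space M" "S \<omega> > x" "Mx \<omega> \<le> x" by auto
      from incl[OF ws(1,2) L t(1) small hx] consider
        (a) "\<exists>i\<in>{1..n}. \<exists>j\<in>{1..n}. i < j \<and> X i \<omega> > L * hx \<and> X j \<omega> > L * hx"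
        | (b) "x - t * hx < Mx \<omega>"
        | (c) "\<exists>i\<in>{1..n}. \<exists>j\<in>{1..n}. i \<noteq> j \<and> X i \<omega> > t / (real n - 1) * hx
            \<and> X j \<omega> > x - (real n - 1) * L * hx" by blast
      then show "\<omega> \<in> (\<Union>p\<in>P2. V1 p) \<union> U2 \<union> (\<Union>p\<in>Pairs. V3 p)"
      proof cases
        case a
        then obtain i j where "i \<in> {1..n}" "j \<in> {1..n}" "i < j" "X i \<omega> > L * hx" "X j \<omega> > L * hx" by blast
        then have "(i, j) \<in> P2" "\<omega> \<in> V1 (i, j)" using ws unfolding P2_def V1_def hx_def by auto
        then show ?thesis by blast
      next
        case b
        then have "\<omega> \<in> U2" using ws unfolding U2_def A_def hx_def by auto
        then show ?thesis by blast
      next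
        case c
        then obtain i j where ij: "i \<in> {1..n}" "j \<in> {1..n}" "i \<noteq> j" "X i \<omega> > t / (real n - 1) * hx"
          "X j \<omega> > x - (real n - 1) * L * hx" by blast
        have "(s / 2) * h x' \<le> (s / 2) * (2 * hx)"
          using elim(5) s unfolding x'_def hx_def by (intro mult_left_mono) auto
        also have "\<dots> = t / (real n - 1) * hx"
        proof -
          have "real n - 1 > 0" using n2 by simp
          then show ?thesis unfolding s_def by (simp add: field_simps)
        qed
        finally have "X i \<omega> > (s / 2) * h x'" using ij(4) by linarith
        moreover have "X j \<omega> > x'" using ij(5) unfolding x'_def c_def hx_def by (simp add: mult.assoc)
        ultimately have "(i, j) \<in> Pairs" "\<omega> \<in> V3 (i, j)" using ws ij unfolding Pairs_def V3_def by auto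
        then show ?thesis by blast
      qed
    qed
    have "prob {\<omega> \<in> space M. S \<omega> > x \<and> Mx \<omega> \<le> x} \<le> prob ((\<Union>p\<in>P2. V1 p) \<union> U2 \<union> (\<Union>p\<in>Pairs. V3 p))"
      using sub V1s V3s U2s by (intro finite_measure_mono) auto
    also have "\<dots> \<le> prob ((\<Union>p\<in>P2. V1 p) \<union> U2) + prob (\<Union>p\<in>Pairs. V3 p)"
      using V1s V3s U2s by (intro measure_Un_le) auto
    also have "prob ((\<Union>p\<in>P2. V1 p) \<union> U2) \<le> prob (\<Union>p\<in>P2. V1 p) + prob U2"
      using V1s U2s by (intro measure_Un_le) auto
    also have "prob (\<Union>p\<in>P2. V1 p) \<le> (\<Sum>p\<in>P2. prob (V1 p))"
      using V1s P2fin by (intro finite_measure_subadditive_finite) auto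
    also have "prob (\<Union>p\<in>Pairs. V3 p) \<le> (\<Sum>p\<in>Pairs. prob (V3 p))"
      using V3s Pairs_fin by (intro finite_measure_subadditive_finite) auto
    also have "prob U2 = D (x - t * h x) - D x"
    proof -
      have "t * h x > 0" using t(1) hpos[of x] by simp
      then have "A x \<subseteq> A (x - t * h x)" unfolding A_def by auto
      then show ?thesis unfolding U2_def D_A by (intro finite_measure_Diff) auto
    qed
    also have "(\<Sum>p\<in>P2. prob (V1 p)) \<le> e / 3 * D x" using elim(1) unfolding V1_def .
    also have "(\<Sum>p\<in>Pairs. prob (V3 p)) \<le> e / (6 * exp c) * D x'" using elim(3) unfolding V3_def x'_def .
    also have "\<dots> \<le> e / (6 * exp c) * ((2 * exp c) * D x)"
      using elim(4) e unfolding x'_def by (intro mult_left_mono) auto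
    also have "\<dots> = e / 3 * D x" by simp
    finally show ?case using elim(2) by (simp add: algebra_simps)
  qed
qed

end

context thm41 begin

definition Q :: "real \<Rightarrow> real" where "Q x = prob {\<omega> \<in> space M. S \<omega> > x}"
definition E :: "nat \<Rightarrow> real \<Rightarrow> real \<Rightarrow> 'a set" where
  "E k d x = {\<omega> \<in> space M. d * x < X k \<omega> \<and> X k \<omega> \<le> x \<and> S \<omega> > x}"
definition Xg :: "nat \<Rightarrow> real \<Rightarrow> 'a set" where "Xg k x = {\<omega> \<in> space M. X k \<omega> > x}"
definition SG :: "real \<Rightarrow> 'a set" where "SG x = {\<omega> \<in> space M. S \<omega> > x}"

lemma sets_simps[measurable]: "k \<in> {1..n} \<Longrightarrow> E k d x \<in> sets M" "k \<in> {1..n} \<Longrightarrow> Xg k x \<in> sets M"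
  "SG x \<in> sets M"
  unfolding E_def Xg_def SG_def by measurable

lemma ind_int: "B \<in> sets M \<Longrightarrow> integrable M (indicator B :: 'a \<Rightarrow> real)"
  by (rule integrable_real_indicator) (auto simp: less_top[symmetric])

lemma int_ci_int: "B \<in> sets M \<Longrightarrow> integrable M (\<lambda>\<omega>. c * indicator B \<omega> :: real)"
  using ind_int by simp

lemma int_ci: "B \<in> sets M \<Longrightarrow> (\<integral>\<omega>. c * indicator B \<omega> \<partial>M) = c * prob B"
  using ind_int by (simp add: integral_indicator Int_absorb2 sets.sets_into_space)

lemma PW:
  assumes w: "\<omega> \<in> space M" and x: "x \<ge> 0" and d: "d > 0" and k: "k \<in> {1..n}"
  shows "indicator (SG x) \<omega> * X k \<omega> \<le> x * indicator (Xg k x) \<omega> + d * x * indicator (A x) \<omega>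
     + Mx \<omega> * indicator (A ((1 + d) * x)) \<omega> + d * x * indicator (SG x) \<omega> + x * indicator (E k d x) \<omega>"
proof -
  have nn: "0 \<le> x * indicator (Xg k x) \<omega>" "0 \<le> d * x * indicator (A x) \<omega>"
     "0 \<le> Mx \<omega> * indicator (A ((1 + d) * x)) \<omega>" "0 \<le> d * x * indicator (SG x) \<omega>"
     "0 \<le> x * indicator (E k d x) \<omega>"
    using x d Mx_nonneg[OF w] by (auto simp: indicator_def)
  show ?thesis
  proof (cases "S \<omega> > x")
    case False
    then show ?thesis using nn unfolding SG_def by (simp add: indicator_def)
  next
    case Sx: True
    then have SG1: "indicator (SG x) \<omega> = (1::real)" using w unfolding SG_def by simp
    show ?thesis
    proof (cases "X k \<omega> \<le> d * x")
      case True
      then show ?thesis unfolding SG1 mult_1 mult_1_right using nn by linarith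
    next
      case notsmall: False
      show ?thesis
      proof (cases "X k \<omega> \<le> x")
        case True
        then have E1: "indicator (E k d x) \<omega> = (1::real)" using w Sx notsmall unfolding E_def by simp
        show ?thesis unfolding SG1 E1 mult_1 mult_1_right using nn True x d mult_nonneg_nonneg[of d x] by linarith
      next
        case big: False
        then have i1: "indicator (Xg k x) \<omega> = (1::real)" using w unfolding Xg_def by simp
        have Mxg: "Mx \<omega> \<ge> X k \<omega>" by (rule Mx_ge[OF k])
        then have iA: "indicator (A x) \<omega> = (1::real)" using w big unfolding A_def by simp
        show ?thesis
        proof (cases "Mx \<omega> > (1 + d) * x")
          case True
          then have "indicator (A ((1 + d) * x)) \<omega> = (1::real)" using w unfolding A_def by simp
          then have iB: "indicator (A ((1 + d) * x)) \<omega> = (1::real)" .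
          show ?thesis unfolding SG1 i1 iA iB mult_1 mult_1_right
            using nn Mxg x d mult_nonneg_nonneg[of d x] by linarith
        next
          case False
          then have "X k \<omega> \<le> x + d * x" using Mxg by (simp add: algebra_simps)
          then show ?thesis unfolding SG1 i1 iA mult_1 mult_1_right
            using nn x d mult_nonneg_nonneg[of d x] by linarith
        qed
      qed
    qed
  qed
qed

lemma int_upper:
  assumes x: "x \<ge> 0" and d: "d > 0" and k: "k \<in> {1..n}"
  shows "(\<integral>\<omega>. indicator (SG x) \<omega> * X k \<omega> \<partial>M) \<le> x * prob (Xg k x) + d * x * D x
     + (\<integral>\<omega>. Mx \<omega> * indicator (A ((1 + d) * x)) \<omega> \<partial>M) + d * x * Q x + x * prob (E k d x)"
proof -
  have "(\<integral>\<omega>. indicator (SG x) \<omega> * X k \<omega> \<partial>M) \<le> (\<integral>\<omega>. x * indicator (Xg k x) \<omega> + d * x * indicator (A x) \<omega>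
     + Mx \<omega> * indicator (A ((1 + d) * x)) \<omega> + d * x * indicator (SG x) \<omega> + x * indicator (E k d x) \<omega> \<partial>M)"
  proof (rule integral_mono)
    show "integrable M (\<lambda>\<omega>. indicator (SG x) \<omega> * X k \<omega>)" using k by (intro X_int) auto
    have s: "Xg k x \<in> sets M" "E k d x \<in> sets M" using k by auto
    show "integrable M (\<lambda>\<omega>. x * indicator (Xg k x) \<omega> + d * x * indicator (A x) \<omega>
     + Mx \<omega> * indicator (A ((1 + d) * x)) \<omega> + d * x * indicator (SG x) \<omega> + x * indicator (E k d x) \<omega>)"
      by (intro Bochner_Integration.integrable_add int_ci_int Mx_ind_int s A_sets sets_simps(3))
  qed (rule PW[OF _ x d k])
  also have "\<dots> = x * prob (Xg k x) + d * x * D x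
     + (\<integral>\<omega>. Mx \<omega> * indicator (A ((1 + d) * x)) \<omega> \<partial>M) + d * x * Q x + x * prob (E k d x)"
  proof -
    have s: "Xg k x \<in> sets M" "E k d x \<in> sets M" using k by auto
    show ?thesis
      by (simp add: int_ci D_A Q_def SG_def[symmetric] s Bochner_Integration.integrable_add int_ci_int ind_int)
  qed
  finally show ?thesis .
qed

end

context thm41 begin

definition Z :: "'a \<Rightarrow> real" where "Z \<omega> = (\<Sum>i\<in>\<Omega>. X i \<omega>)"
definition r :: "real \<Rightarrow> real" where "r x = (\<Sum>i\<in>\<Omega>. prob (Xg i x)) / T x"
definition cc :: "real \<Rightarrow> real" where "cc x = cond_exp_event M Z (SG x) / x"
definition PS :: "real \<Rightarrow> real" where
  "PS x = (\<Sum>p\<in>Pairs. prob {\<omega> \<in> space M. X (fst p) \<omega> > 1 * h x \<and> X (snd p) \<omega> > x})"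

lemma Omega_fin: "finite \<Omega>" using \<Omega>(1) by (rule finite_subset) simp

lemma T_Xg: "T x = (\<Sum>i\<in>{1..n}. prob (Xg i x))" unfolding T_def Xg_def ..

lemma Q_SG: "Q x = prob (SG x)" unfolding Q_def SG_def ..

lemma D_le_Q: "D x \<le> Q x"
  unfolding D_def Q_def using Mx_le_S by (intro finite_measure_mono) (auto intro: less_le_trans)

lemma Q_le: "Q x \<le> D x + prob {\<omega> \<in> space M. S \<omega> > x \<and> Mx \<omega> \<le> x}"
proof -
  have "SG x \<subseteq> A x \<union> {\<omega> \<in> space M. S \<omega> > x \<and> Mx \<omega> \<le> x}" unfolding SG_def A_def by auto
  then have "Q x \<le> prob (A x \<union> {\<omega> \<in> space M. S \<omega> > x \<and> Mx \<omega> \<le> x})"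
    unfolding Q_SG by (intro finite_measure_mono) auto
  also have "\<dots> \<le> D x + prob {\<omega> \<in> space M. S \<omega> > x \<and> Mx \<omega> \<le> x}"
    unfolding D_A by (intro measure_Un_le) auto
  finally show ?thesis .
qed

lemma D_le_T: "D x \<le> T x"
proof -
  have "A x \<subseteq> (\<Union>i\<in>{1..n}. Xg i x)"
  proof
    fix \<omega> assume "\<omega> \<in> A x"
    moreover obtain i where "i \<in> {1..n}" "Mx \<omega> = X i \<omega>" using Mx_attained by blast
    ultimately show "\<omega> \<in> (\<Union>i\<in>{1..n}. Xg i x)" unfolding A_def Xg_def by auto
  qed
  then have "D x \<le> prob (\<Union>i\<in>{1..n}. Xg i x)" unfolding D_A by (intro finite_measure_mono) auto
  also have "\<dots> \<le> T x" unfolding T_Xg by (intro finite_measure_subadditive_finite) auto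
  finally show ?thesis .
qed

lemma sumO_le_T: "(\<Sum>i\<in>\<Omega>. prob (Xg i x)) \<le> T x"
  unfolding T_Xg using \<Omega>(1) by (intro sum_mono2) auto

lemma r_bounds: "0 \<le> r x" "r x \<le> 1"
proof -
  have T: "T x > 0" using D_le_T[of x] D_pos[of x] by simp
  show "0 \<le> r x" unfolding r_def using T by (intro divide_nonneg_pos sum_nonneg) auto
  show "r x \<le> 1" unfolding r_def using T sumO_le_T by simp
qed

lemma integral_Z: "(\<integral>\<omega>. indicator (SG x) \<omega> * Z \<omega> \<partial>M) = (\<Sum>k\<in>\<Omega>. \<integral>\<omega>. indicator (SG x) \<omega> * X k \<omega> \<partial>M)"
  unfolding Z_def sum_distrib_left
  by (rule Bochner_Integration.integral_sum) (use \<Omega>(1) in \<open>auto intro!: X_int\<close>)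

lemma cc_eq: "cc x = (\<Sum>k\<in>\<Omega>. \<integral>\<omega>. indicator (SG x) \<omega> * X k \<omega> \<partial>M) / Q x / x"
  unfolding cc_def cond_exp_event_def integral_Z Q_SG ..

lemma Ek_bound:
  assumes k: "k \<in> {1..n}" and hd: "h x \<le> d * x"
  shows "prob (E k d x) \<le> prob {\<omega> \<in> space M. S \<omega> > x \<and> Mx \<omega> \<le> x} + PS x"
proof -
  define C where "C i = {\<omega> \<in> space M. X k \<omega> > 1 * h x \<and> X i \<omega> > x}" for i
  have Cs: "C i \<in> sets M" if "i \<in> {1..n}" for i using that k unfolding C_def by measurable
  have "E k d x \<subseteq> {\<omega> \<in> space M. S \<omega> > x \<and> Mx \<omega> \<le> x} \<union> (\<Union>i\<in>{1..n} - {k}. C i)"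
  proof
    fix \<omega> assume w: "\<omega> \<in> E k d x"
    show "\<omega> \<in> {\<omega> \<in> space M. S \<omega> > x \<and> Mx \<omega> \<le> x} \<union> (\<Union>i\<in>{1..n} - {k}. C i)"
    proof (cases "Mx \<omega> \<le> x")
      case True then show ?thesis using w unfolding E_def by auto
    next
      case False
      obtain i where i: "i \<in> {1..n}" "Mx \<omega> = X i \<omega>" using Mx_attained by blast
      then have "X i \<omega> > x" using False by simp
      moreover have "i \<noteq> k" using w \<open>X i \<omega> > x\<close> unfolding E_def by auto
      moreover have "X k \<omega> > 1 * h x" using w hd unfolding E_def by auto
      ultimately have "\<omega> \<in> C i" "i \<in> {1..n} - {k}" using w i unfolding C_def E_def by auto
      then show ?thesis by blast
    qed
  qed
  then have "prob (E k d x) \<le> prob ({\<omega> \<in> space M. S \<omega> > x \<and> Mx \<omega> \<le> x} \<union> (\<Union>i\<in>{1..n} - {k}. C i))"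
    using Cs by (intro finite_measure_mono) auto
  also have "\<dots> \<le> prob {\<omega> \<in> space M. S \<omega> > x \<and> Mx \<omega> \<le> x} + prob (\<Union>i\<in>{1..n} - {k}. C i)"
    using Cs by (intro measure_Un_le) auto
  also have "prob (\<Union>i\<in>{1..n} - {k}. C i) \<le> (\<Sum>i\<in>{1..n} - {k}. prob (C i))"
    using Cs by (intro finite_measure_subadditive_finite) auto
  also have "(\<Sum>i\<in>{1..n} - {k}. prob (C i)) = (\<Sum>p\<in>{k} \<times> ({1..n} - {k}).
        prob {\<omega> \<in> space M. X (fst p) \<omega> > 1 * h x \<and> X (snd p) \<omega> > x})"
  proof -
    have "{k} \<times> ({1..n} - {k}) = Pair k ` ({1..n} - {k})" by auto
    then show ?thesis unfolding C_def by (simp add: sum.reindex inj_on_def)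
  qed
  also have "\<dots> \<le> PS x"
    unfolding PS_def using k Pairs_fin by (intro sum_mono2) (auto simp: Pairs_def)
  finally show ?thesis by simp
qed

end

context thm41 begin

lemma Q_pos: "Q x > 0" using D_le_Q[of x] D_pos[of x] by simp
lemma T_pos: "T x > 0" using D_le_T[of x] D_pos[of x] by simp

lemma int_lb:
  assumes k: "k \<in> {1..n}" and x: "x > 0"
  shows "x * prob (Xg k x) \<le> (\<integral>\<omega>. indicator (SG x) \<omega> * X k \<omega> \<partial>M)"
proof -
  have "x * prob (Xg k x) = (\<integral>\<omega>. x * indicator (Xg k x) \<omega> \<partial>M)" using k by (simp add: int_ci)
  also have "\<dots> \<le> (\<integral>\<omega>. indicator (SG x) \<omega> * X k \<omega> \<partial>M)"
  proof (rule integral_mono)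
    show "integrable M (\<lambda>\<omega>. x * indicator (Xg k x) \<omega>)" using k by (intro int_ci_int) auto
    show "integrable M (\<lambda>\<omega>. indicator (SG x) \<omega> * X k \<omega>)" using k by (intro X_int) auto
    fix \<omega> assume w: "\<omega> \<in> space M"
    show "x * indicator (Xg k x) \<omega> \<le> indicator (SG x) \<omega> * X k \<omega>"
    proof (cases "X k \<omega> > x")
      case True
      then have "S \<omega> > x" using X_le_S[OF k w] by simp
      then show ?thesis using True w unfolding Xg_def SG_def by simp
    next
      case False
      then show ?thesis using w nonneg[OF k w] unfolding Xg_def SG_def by (simp add: indicator_def)
    qed
  qed
  finally show ?thesis .
qed

lemma LB: "e > 0 \<Longrightarrow> eventually (\<lambda>x. r x - e \<le> cc x) at_top"
proof -
  assume e: "e > 0"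
  have ev1: "eventually (\<lambda>x. prob {\<omega> \<in> space M. S \<omega> > x \<and> Mx \<omega> \<le> x} \<le> e * D x) at_top"
    by (rule K[OF e])
  have ev2: "eventually (\<lambda>x::real. x > 0) at_top" by (rule eventually_gt_at_top)
  from ev1 ev2 show ?thesis
  proof eventually_elim
    case (elim x)
    define \<Sigma> where "\<Sigma> = (\<Sum>i\<in>\<Omega>. prob (Xg i x))"
    have Sig: "\<Sigma> \<ge> 0" unfolding \<Sigma>_def by (intro sum_nonneg) auto
    have "x * \<Sigma> \<le> (\<Sum>k\<in>\<Omega>. \<integral>\<omega>. indicator (SG x) \<omega> * X k \<omega> \<partial>M)"
      unfolding \<Sigma>_def sum_distrib_left using \<Omega>(1) elim(2) by (intro sum_mono int_lb) auto
    then have "x * \<Sigma> / Q x / x \<le> cc x" unfolding cc_eq using Q_pos[of x] elim(2)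
      by (intro divide_right_mono) auto
    then have c1: "\<Sigma> / Q x \<le> cc x" using elim(2) by simp
    have "Q x \<le> (1 + e) * D x" using Q_le[of x] elim(1) by (simp add: algebra_simps)
    also have "\<dots> \<le> (1 + e) * T x" using D_le_T[of x] e by (intro mult_left_mono) auto
    finally have "Q x \<le> (1 + e) * T x" .
    then have "\<Sigma> / ((1 + e) * T x) \<le> \<Sigma> / Q x"
      using Sig Q_pos[of x] by (intro divide_left_mono) auto
    also have "\<Sigma> / ((1 + e) * T x) = r x / (1 + e)" unfolding r_def \<Sigma>_def by simp
    finally have c2: "r x / (1 + e) \<le> cc x" using c1 by simp
    have "r x - e \<le> r x / (1 + e)"
    proof -
      have "r x * e \<le> 1 * e" using r_bounds[of x] e by (intro mult_right_mono) auto
      moreover have "(r x - e) * (1 + e) = r x + r x * e - e - e * e" by (simp add: algebra_simps)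
      moreover have "e * e \<ge> 0" by simp
      ultimately have "(r x - e) * (1 + e) \<le> r x" by linarith
      then show ?thesis using e by (simp add: le_divide_eq)
    qed
    then show ?case using c2 by simp
  qed
qed

end

context thm41 begin

lemma per_k:
  assumes k: "k \<in> {1..n}" and x: "x > 0" and d: "d > 0" "d \<le> 1" and eta: "eta \<ge> 0"
    and hK: "prob {\<omega> \<in> space M. S \<omega> > x \<and> Mx \<omega> \<le> x} \<le> d * D x"
    and hPS: "PS x \<le> d * D x" and hh: "h x \<le> d * x"
    and htail: "(\<integral>\<omega>. Mx \<omega> * indicator (A ((1 + d) * x)) \<omega> \<partial>M) \<le> 4 * ((1 + d) * x) * D ((1 + d) * x)"
    and hrap: "D ((1 + d) * x) \<le> eta * D x"
  shows "(\<integral>\<omega>. indicator (SG x) \<omega> * X k \<omega> \<partial>M) \<le> x * prob (Xg k x) + x * Q x * (4 * d + 8 * eta)"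
proof -
  have DQ: "D x \<le> Q x" by (rule D_le_Q)
  have Dn: "D x \<ge> 0" by (rule D_nonneg)
  have t1: "(\<integral>\<omega>. Mx \<omega> * indicator (A ((1 + d) * x)) \<omega> \<partial>M) \<le> x * Q x * (8 * eta)"
  proof -
    have "4 * ((1 + d) * x) * D ((1 + d) * x) \<le> 4 * ((1 + d) * x) * (eta * D x)"
      using hrap x d by (intro mult_left_mono) auto
    also have "\<dots> \<le> 4 * (2 * x) * (eta * Q x)"
      using d x eta DQ Dn by (intro mult_mono mult_left_mono) auto
    also have "\<dots> = x * Q x * (8 * eta)" by simp
    finally show ?thesis using htail by linarith
  qed
  have t2: "x * prob (E k d x) \<le> x * Q x * (2 * d)"
  proof -
    have "prob (E k d x) \<le> 2 * d * D x" using Ek_bound[OF k hh] hK hPS by linarith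
    also have "\<dots> \<le> 2 * d * Q x" using DQ d by (intro mult_left_mono) auto
    finally have "prob (E k d x) \<le> Q x * (2 * d)" by (simp add: mult.commute)
    then have "x * prob (E k d x) \<le> x * (Q x * (2 * d))" using x by (intro mult_left_mono) auto
    then show ?thesis by (simp add: mult.assoc)
  qed
  have t3: "d * x * D x \<le> d * x * Q x" using DQ d x by (intro mult_left_mono) auto
  show ?thesis
    using int_upper[OF less_imp_le[OF x] d(1) k] t1 t2 t3 by (simp add: algebra_simps)
qed

lemma UB1: "0 < e \<Longrightarrow> e \<le> 1 \<Longrightarrow> eventually (\<lambda>x. cc x \<le> r x + e) at_top"
proof -
  assume e: "0 < e" "e \<le> 1"
  define d where "d = e / (16 * real n)"
  define eta where "eta = e / (32 * real n)"
  have n0: "real n \<ge> 2" using n2 by simp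
  have d: "d > 0" "d \<le> 1" unfolding d_def using e n0 by (auto simp: field_simps)
  have eta: "eta > 0" unfolding eta_def using e n0 by simp
  have ev_K: "eventually (\<lambda>x. prob {\<omega> \<in> space M. S \<omega> > x \<and> Mx \<omega> \<le> x} \<le> d * D x) at_top"
    by (rule K[OF d(1)])
  have ev_PS: "eventually (\<lambda>x. PS x \<le> d * D x) at_top"
    unfolding PS_def using Pairs_fin d by (intro small_sum) (auto simp: Pairs_def intro!: cond1'[where t=1, simplified])
  have ev_T: "eventually (\<lambda>x. T x \<le> (1 + d) * D x) at_top" by (rule T_le[OF d(1)])
  have ev_h: "eventually (\<lambda>x. h x \<le> d * x) at_top" by (rule h_small[OF d(1)])
  obtain y0 where y0: "\<And>y. y \<ge> y0 \<Longrightarrow> (\<integral>\<omega>. Mx \<omega> * indicator (A y) \<omega> \<partial>M) \<le> 4 * y * D y"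
    using tail_int by (auto simp: eventually_at_top_linorder)
  have ev_tail: "eventually (\<lambda>x. (\<integral>\<omega>. Mx \<omega> * indicator (A ((1 + d) * x)) \<omega> \<partial>M)
      \<le> 4 * ((1 + d) * x) * D ((1 + d) * x)) at_top"
  proof -
    have "eventually (\<lambda>x. x \<ge> \<bar>y0\<bar>) at_top" by (rule eventually_ge_at_top)
    then show ?thesis
    proof eventually_elim
      case (elim x)
      have "(1 + d) * x \<ge> x" using elim d by (simp add: algebra_simps)
      then show ?case using elim by (intro y0) linarith
    qed
  qed
  have ev_rap: "eventually (\<lambda>x. D ((1 + d) * x) \<le> eta * D x) at_top"
    by (rule rapid) (use d eta in auto)
  have ev_x: "eventually (\<lambda>x::real. x > 0) at_top" by (rule eventually_gt_at_top)
  from ev_K ev_PS ev_T ev_h ev_tail ev_rap ev_x show ?thesis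
  proof eventually_elim
    case (elim x)
    define \<Sigma> where "\<Sigma> = (\<Sum>i\<in>\<Omega>. prob (Xg i x))"
    have Sig: "\<Sigma> \<ge> 0" unfolding \<Sigma>_def by (intro sum_nonneg) auto
    have Qp: "Q x > 0" by (rule Q_pos)
    have cardO: "real (card \<Omega>) \<le> real n"
      using card_mono[OF _ \<Omega>(1)] by simp
    have "(\<Sum>k\<in>\<Omega>. \<integral>\<omega>. indicator (SG x) \<omega> * X k \<omega> \<partial>M)
        \<le> (\<Sum>k\<in>\<Omega>. x * prob (Xg k x) + x * Q x * (4 * d + 8 * eta))"
      using \<Omega>(1) elim d eta by (intro sum_mono per_k) auto
    also have "\<dots> = x * \<Sigma> + real (card \<Omega>) * (x * Q x * (4 * d + 8 * eta))"
      unfolding \<Sigma>_def by (simp add: sum.distrib sum_distrib_left)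
    also have "\<dots> \<le> x * \<Sigma> + real n * (x * Q x * (4 * d + 8 * eta))"
      using cardO elim(7) Qp d eta by (intro add_left_mono mult_right_mono) auto
    finally have I: "(\<Sum>k\<in>\<Omega>. \<integral>\<omega>. indicator (SG x) \<omega> * X k \<omega> \<partial>M)
        \<le> x * \<Sigma> + real n * (x * Q x * (4 * d + 8 * eta))" .
    have "cc x \<le> (x * \<Sigma> + real n * (x * Q x * (4 * d + 8 * eta))) / Q x / x"
      unfolding cc_eq using I Qp elim(7) by (intro divide_right_mono) auto
    also have "\<dots> = \<Sigma> / Q x + real n * (4 * d + 8 * eta)"
      using Qp elim(7) by (simp add: field_simps)
    also have "real n * (4 * d + 8 * eta) = e / 2"
      unfolding d_def eta_def using n0 by (simp add: field_simps)
    also have "\<Sigma> / Q x \<le> \<Sigma> / D x"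
      using Sig D_pos[of x] D_le_Q[of x] by (intro divide_left_mono) auto
    also have "\<Sigma> / D x = r x * (T x / D x)"
      unfolding r_def \<Sigma>_def using T_pos[of x] by simp
    also have "\<dots> \<le> r x * (1 + d)"
      using elim(3) D_pos[of x] r_bounds[of x] by (intro mult_left_mono) (auto simp: divide_le_eq)
    also have "\<dots> \<le> r x + d" using r_bounds[of x] d by (simp add: algebra_simps)
    finally have "cc x \<le> r x + d + e / 2" by simp
    moreover have "d \<le> e / 2" unfolding d_def using n0 e by (simp add: field_simps)
    ultimately show ?case by simp
  qed
qed

lemma UB: "0 < e \<Longrightarrow> eventually (\<lambda>x. cc x \<le> r x + e) at_top"
proof -
  assume e: "0 < e"
  have "eventually (\<lambda>x. cc x \<le> r x + min e 1) at_top" by (rule UB1) (use e in auto)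
  then show ?thesis by eventually_elim (smt (verit) min.cobounded1)
qed

end


lemma assemble:
  fixes r c V :: "real \<Rightarrow> real"
  assumes lo: "\<And>e. e > 0 \<Longrightarrow> eventually (\<lambda>x. r x - e \<le> c x) at_top"
    and up: "\<And>e. e > 0 \<Longrightarrow> eventually (\<lambda>x. c x \<le> r x + e) at_top"
    and V: "filterlim V at_top (at_left 1)"
  shows "Liminf at_top (\<lambda>x. ereal (r x)) \<le> Liminf (at_left 1) (\<lambda>q. ereal (c (V q)))
     \<and> Liminf (at_left 1) (\<lambda>q. ereal (c (V q))) \<le> Limsup (at_left 1) (\<lambda>q. ereal (c (V q)))
     \<and> Limsup (at_left 1) (\<lambda>q. ereal (c (V q))) \<le> Limsup at_top (\<lambda>x. ereal (r x))"
proof (intro conjI)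
  show "Liminf at_top (\<lambda>x. ereal (r x)) \<le> Liminf (at_left 1) (\<lambda>q. ereal (c (V q)))"
    unfolding le_Liminf_iff
  proof (intro allI impI)
    fix y assume y: "y < Liminf at_top (\<lambda>x. ereal (r x))"
    obtain z where z: "y < ereal z" "ereal z < Liminf at_top (\<lambda>x. ereal (r x))"
      using ereal_dense2[OF y] by blast
    obtain z' where z': "y < ereal z'" "ereal z' < ereal z" using ereal_dense2[OF z(1)] by blast
    have ev1: "eventually (\<lambda>x. ereal z < ereal (r x)) at_top"
      using le_Liminf_iff[THEN iffD1, OF order_refl] z(2) by blast
    have ev2: "eventually (\<lambda>x. r x - (z - z') \<le> c x) at_top" using lo z' by simp
    have "eventually (\<lambda>x. y < ereal (c x)) at_top"
      using ev1 ev2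
    proof eventually_elim
      case (elim x)
      then have "z' < c x" by simp
      then show ?case using z'(1) by (metis less_ereal.simps(1) order.strict_trans)
    qed
    then show "\<forall>\<^sub>F q in at_left 1. y < ereal (c (V q))"
      using V unfolding filterlim_iff by blast
  qed
next
  show "Liminf (at_left 1) (\<lambda>q. ereal (c (V q))) \<le> Limsup (at_left 1) (\<lambda>q. ereal (c (V q)))"
    by (rule Liminf_le_Limsup) simp
next
  show "Limsup (at_left 1) (\<lambda>q. ereal (c (V q))) \<le> Limsup at_top (\<lambda>x. ereal (r x))"
    unfolding Limsup_le_iff
  proof (intro allI impI)
    fix y assume y: "y > Limsup at_top (\<lambda>x. ereal (r x))"
    obtain z where z: "Limsup at_top (\<lambda>x. ereal (r x)) < ereal z" "ereal z < y"
      using ereal_dense2[OF y] by blast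
    obtain z' where z': "ereal z < ereal z'" "ereal z' < y" using ereal_dense2[OF z(2)] by blast
    have ev1: "eventually (\<lambda>x. ereal (r x) < ereal z) at_top"
      using Limsup_le_iff[THEN iffD1, OF order_refl] z(1) by blast
    have ev2: "eventually (\<lambda>x. c x \<le> r x + (z' - z)) at_top" using up z' by simp
    have "eventually (\<lambda>x. ereal (c x) < y) at_top"
      using ev1 ev2
    proof eventually_elim
      case (elim x)
      then have "c x < z'" by simp
      then show ?case using z'(2) by (metis less_ereal.simps(1) order.strict_trans)
    qed
    then show "\<forall>\<^sub>F q in at_left 1. ereal (c (V q)) < y"
      using V unfolding filterlim_iff by blast
  qed
qed


context thm41 begin

lemma tail_lim0:
  fixes f :: "'a \<Rightarrow> real"
  assumes f[measurable]: "f \<in> borel_measurable M"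
  shows "((\<lambda>x. prob {\<omega> \<in> space M. f \<omega> > x}) \<longlongrightarrow> 0) at_top"
proof -
  define B where "B k = {\<omega> \<in> space M. f \<omega> > real k}" for k :: nat
  have "(\<lambda>k. prob (B k)) \<longlonglongrightarrow> prob (\<Inter> (range B))"
    by (rule finite_Lim_measure_decseq) (auto simp: B_def monotone_on_def)
  moreover have "\<Inter> (range B) = {}"
  proof safe
    fix \<omega> assume "\<omega> \<in> \<Inter> (range B)"
    then have "f \<omega> > real (nat (ceiling (f \<omega>)))" unfolding B_def by blast
    then show "\<omega> \<in> {}" by linarith
  qed
  ultimately have lim: "(\<lambda>k. prob {\<omega> \<in> space M. f \<omega> > real k}) \<longlonglongrightarrow> 0" unfolding B_def by simp
  have mono: "prob {\<omega> \<in> space M. f \<omega> > y} \<le> prob {\<omega> \<in> space M. f \<omega> > x}" if "x \<le> y" for x y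
    using that by (intro finite_measure_mono) auto
  show ?thesis
  proof (rule order_tendstoI)
    fix e :: real assume "e > 0"
    then obtain N where "prob {\<omega> \<in> space M. f \<omega> > real N} < e" using order_tendstoD(2)[OF lim \<open>e > 0\<close>]
      by (auto simp: eventually_sequentially)
    then have "\<forall>x\<ge>real N. prob {\<omega> \<in> space M. f \<omega> > x} < e" using mono by (meson le_less_trans)
    then show "\<forall>\<^sub>F x in at_top. prob {\<omega> \<in> space M. f \<omega> > x} < e" by (auto simp: eventually_at_top_linorder)
  next
    fix e :: real assume "e < 0"
    then show "\<forall>\<^sub>F x in at_top. e < prob {\<omega> \<in> space M. f \<omega> > x}"
      by (intro always_eventually allI) (auto intro: less_le_trans)
  qed
qed

lemma distfun_S: "distfun M S y = 1 - Q y"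
proof -
  have "{\<omega> \<in> space M. S \<omega> \<le> y} = space M - {\<omega> \<in> space M. S \<omega> > y}" by auto
  then show ?thesis unfolding distfun_def Q_def by (simp add: prob_compl)
qed

lemma Q_mono: "x \<le> y \<Longrightarrow> Q y \<le> Q x"
  unfolding Q_def by (intro finite_measure_mono) auto

lemma VaR_lim: "filterlim (VaR M S) at_top (at_left 1)"
  unfolding filterlim_at_top
proof (intro allI)
  fix Z0 :: real
  have "1 - Q Z0 < 1" using Q_pos[of Z0] by simp
  from eventually_at_left_real[OF this] show "\<forall>\<^sub>F q in at_left 1. Z0 \<le> VaR M S q"
  proof eventually_elim
    case (elim q)
    then have q: "1 - Q Z0 < q" "q < 1" by auto
    define Y where "Y = {y. distfun M S y \<ge> q}"
    have "eventually (\<lambda>y. Q y < 1 - q) at_top"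
      using order_tendstoD(2)[OF tail_lim0[OF S_meas], of "1 - q"] q unfolding Q_def by simp
    then obtain y where "Q y < 1 - q" by (auto simp: eventually_at_top_linorder)
    then have "y \<in> Y" unfolding Y_def distfun_S by simp
    then have ne: "Y \<noteq> {}" by blast
    have "Z0 \<le> y'" if "y' \<in> Y" for y'
    proof (rule ccontr)
      assume "\<not> Z0 \<le> y'"
      then have "Q Z0 \<le> Q y'" by (intro Q_mono) simp
      then show False using that q unfolding Y_def distfun_S by simp
    qed
    then have "Z0 \<le> Inf Y" using ne by (intro cInf_greatest) auto
    then show ?case unfolding VaR_def Y_def .
  qed
qed

end

theorem theorem4p1:
  fixes M :: "'a measure" and X :: "nat \<Rightarrow> 'a \<Rightarrow> real" and n :: nat
    and h :: "real \<Rightarrow> real" and \<Omega> :: "nat set"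
  assumes "prob_space M"
    and n2: "n \<ge> 2"
    and meas: "\<And>i. i \<in> {1..n} \<Longrightarrow> X i \<in> borel_measurable M"
    and nonneg: "\<And>i \<omega>. i \<in> {1..n} \<Longrightarrow> \<omega> \<in> space M \<Longrightarrow> X i \<omega> \<ge> 0"
    and nondeg: "\<And>i. i \<in> {1..n} \<Longrightarrow> measure M {\<omega> \<in> space M. X i \<omega> = 0} \<noteq> 1"
    and endpoint: "upper_endpoint (distfun M (\<lambda>\<omega>. Max ((\<lambda>i. X i \<omega>) ` {1..n}))) = \<infinity>"
    and hpos: "\<And>x. h x > 0"
    and gmda: "GMDA (distfun M (\<lambda>\<omega>. Max ((\<lambda>i. X i \<omega>) ` {1..n}))) h"
    and cond1: "\<And>i j t. i \<in> {1..n} \<Longrightarrow> j \<in> {1..n} \<Longrightarrow> i \<noteq> j \<Longrightarrow> t > 0 \<Longrightarrow>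
       ((\<lambda>x. measure M {\<omega> \<in> space M. \<bar>X i \<omega>\<bar> > t * h x \<and> X j \<omega> > x}
           / measure M {\<omega> \<in> space M. Max ((\<lambda>k. X k \<omega>) ` {1..n}) > x}) \<longlongrightarrow> 0) at_top"
    and cond2: "\<exists>L>0. \<forall>i\<in>{1..n}. \<forall>j\<in>{1..n}. i < j \<longrightarrow>
       ((\<lambda>x. measure M {\<omega> \<in> space M. X i \<omega> > L * h x \<and> X j \<omega> > L * h x}
           / measure M {\<omega> \<in> space M. Max ((\<lambda>k. X k \<omega>) ` {1..n}) > x}) \<longlongrightarrow> 0) at_top"
    and \<Omega>: "\<Omega> \<subseteq> {1..n}" "\<Omega> \<noteq> {}"
  shows
   "let S = (\<lambda>\<omega>. \<Sum>i\<in>{1..n}. X i \<omega>);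
        ratio = (\<lambda>x. (\<Sum>i\<in>\<Omega>. measure M {\<omega> \<in> space M. X i \<omega> > x})
                     / (\<Sum>i\<in>{1..n}. measure M {\<omega> \<in> space M. X i \<omega> > x}));
        cte = (\<lambda>q. cond_exp_event M (\<lambda>\<omega>. \<Sum>i\<in>\<Omega>. X i \<omega>)
                       {\<omega> \<in> space M. S \<omega> > VaR M S q} / VaR M S q)
    in Liminf at_top (\<lambda>x. ereal (ratio x)) \<le> Liminf (at_left 1) (\<lambda>q. ereal (cte q))
     \<and> Liminf (at_left 1) (\<lambda>q. ereal (cte q)) \<le> Limsup (at_left 1) (\<lambda>q. ereal (cte q))
     \<and> Limsup (at_left 1) (\<lambda>q. ereal (cte q)) \<le> Limsup at_top (\<lambda>x. ereal (ratio x))"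
proof -
  interpret T: thm41 M X n h \<Omega>
    by (rule thm41.intro[OF assms(1)], rule thm41_axioms.intro) (use assms in auto)
  have Seq: "(\<lambda>\<omega>. \<Sum>i\<in>{1..n}. X i \<omega>) = T.S" unfolding T.S_def ..
  have req: "(\<lambda>x. (\<Sum>i\<in>\<Omega>. measure M {\<omega> \<in> space M. X i \<omega> > x})
                     / (\<Sum>i\<in>{1..n}. measure M {\<omega> \<in> space M. X i \<omega> > x})) = T.r"
    unfolding T.r_def T.T_def T.Xg_def ..
  have ceq: "(\<lambda>q. cond_exp_event M (\<lambda>\<omega>. \<Sum>i\<in>\<Omega>. X i \<omega>)
                       {\<omega> \<in> space M. T.S \<omega> > VaR M T.S q} / VaR M T.S q) = (\<lambda>q. T.cc (VaR M T.S q))"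
    unfolding T.cc_def T.SG_def T.Z_def ..
  show ?thesis
    using assemble[OF T.LB T.UB T.VaR_lim]
    unfolding Let_def Seq req T.cc_def T.SG_def T.Z_def .
qed


end
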